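(* Let $r\in\mathbb N$, let $M$ be the sub-add move matrix, and let $\Delta$ be the subgraph of $\Gamma_{M,\,2^r}$ induced on $V(\Gamma_{M,\,2^r})\setminus\{(0,0)\}$. Then $\Delta$ is an inverted $PBT_d$ of depth $d=2r-1$. Moreover, $\Gamma_{M,\,2^r}$ is obtained from $\Delta$ by adding the vertex $(0,0)$ together with the two arcs $((2^{r-1},2^{r-1}),(0,0))$ and $((0,0),(0,0))$.
   Context: The sub-add move matrix is $M=\begin{pmatrix}1&-1\\1&1\end{pmatrix}$. For $n\in\mathbb N$, $\Gamma_{M,\,n}$ is the directed graph with vertex set $\mathbb Z_n^2$ and arcs $((a,b),(a-b,a+b))$ for all $(a,b)\in\mathbb Z_n^2$ (computed mod $n$; loops allowed). A perfect binary tree $PBT_d$ is a rooted binary tree in which every non-leaf node has exactly two children and all leaves are at the same depth $d$; it is regarded as directed so that there is a unique directed path from the root (the unique parentless node) to each leaf. It is called inverted if the orientation of every arc is reversed. *)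

theory Defs
  imports Main
begin

text \<open>Vertices of Z_n^2 are represented by pairs of integers in {0..<n}.\<close>
definition subadd_V :: "nat \<Rightarrow> (int \<times> int) set" where
  "subadd_V n = {0..<int n} \<times> {0..<int n}"

text \<open>Arcs of Gamma_{M,n} for the sub-add move matrix M = [[1,-1],[1,1]]:
  (a,b) goes to (a-b, a+b) mod n.\<close>
definition subadd_A :: "nat \<Rightarrow> ((int \<times> int) \<times> (int \<times> int)) set" where
  "subadd_A n = {((a, b), ((a - b) mod int n, (a + b) mod int n)) | a b. (a, b) \<in> subadd_V n}"

definition induced_A :: "('a \<times> 'a) set \<Rightarrow> 'a set \<Rightarrow> ('a \<times> 'a) set" where
  "induced_A A W = A \<inter> (W \<times> W)"

definition pbt_V :: "nat \<Rightarrow> bool list set" where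
  "pbt_V d = {xs. length xs \<le> d}"

definition pbt_A :: "nat \<Rightarrow> (bool list \<times> bool list) set" where
  "pbt_A d = {(xs, xs @ [b]) | xs b. length xs < d}"

definition inverted_PBT :: "'a set \<Rightarrow> ('a \<times> 'a) set \<Rightarrow> nat \<Rightarrow> bool" where
  "inverted_PBT V A d \<longleftrightarrow> A \<subseteq> V \<times> V \<and>
     (\<exists>f. bij_betw f V (pbt_V d) \<and>
          (\<forall>u\<in>V. \<forall>v\<in>V. (u, v) \<in> A \<longleftrightarrow> (f v, f u) \<in> pbt_A d))"

end

theory Submission imports Defs begin

definition Tm :: "nat \<Rightarrow> int \<times> int \<Rightarrow> int \<times> int" where
  "Tm r u = ((fst u - snd u) mod 2^r, (fst u + snd u) mod 2^r)"

lemma small_dvd_zero: "(m::int) dvd x \<Longrightarrow> \<bar>x\<bar> < m \<Longrightarrow> x = 0"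
proof (rule ccontr)
  assume a: "m dvd x" "\<bar>x\<bar> < m" "x \<noteq> 0"
  have "\<bar>m\<bar> \<le> \<bar>x\<bar>" using dvd_imp_le_int[OF a(3) a(1)] .
  moreover have "m \<le> \<bar>m\<bar>" by simp
  ultimately show False using a(2) by linarith
qed

context fixes r :: nat assumes r1: "r \<ge> 1"
begin

lemma n_eq: "(2::int)^r = 2 * 2^(r-1)"
  using r1 by (metis Suc_diff_le diff_Suc_1 power_Suc)

lemma h_pos: "(0::int) < 2^(r-1)" by simp

lemma Tm_V: "Tm r u \<in> subadd_V (2^r)"
  unfolding Tm_def subadd_V_def by simp

lemma TT: "Tm r (Tm r (a,b)) = ((-2*b) mod 2^r, (2*a) mod 2^r)"
  unfolding Tm_def by (simp add: mod_diff_eq mod_add_eq)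

lemma Tpow: "u \<in> subadd_V (2^r) \<Longrightarrow> \<exists>x y. (Tm r ^^ (2*k)) u = ((2^k*x) mod 2^r, (2^k*y) mod 2^r)"
proof (induction k)
  case 0
  obtain a b where u: "u = (a,b)" by (cases u)
  have "a mod 2^r = a" "b mod 2^r = b" using 0 by (auto simp: u subadd_V_def)
  then show ?case by (metis u funpow_0 mult_0_right power_0 mult_1)
next
  case (Suc k)
  then obtain x y where e: "(Tm r ^^ (2*k)) u = ((2^k*x) mod 2^r, (2^k*y) mod 2^r)" by blast
  have "(Tm r ^^ (2*Suc k)) u = Tm r (Tm r ((Tm r ^^ (2*k)) u))" by simp
  also have "\<dots> = ((-2*((2^k*y) mod 2^r)) mod 2^r, (2*((2^k*x) mod 2^r)) mod 2^r)"
    by (simp add: e TT)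
  also have "\<dots> = (((-2)*(2^k*y)) mod 2^r, (2*(2^k*x)) mod 2^r)"
    by (simp only: mod_mult_right_eq)
  also have "\<dots> = ((2^Suc k*(-y)) mod 2^r, (2^Suc k*x) mod 2^r)"
    by (simp add: algebra_simps)
  finally show ?case by blast
qed

lemma Tpow_zero: "u \<in> subadd_V (2^r) \<Longrightarrow> (Tm r ^^ (2*r)) u = (0,0)"
  using Tpow[of u r] by auto

lemma kernel: assumes "u \<in> subadd_V (2^r)" "Tm r u = (0,0)"
  shows "u = (0,0) \<or> u = (2^(r-1), 2^(r-1))"
proof -
  obtain a b where u: "u = (a,b)" by (cases u)
  define h where "h = (2::int)^(r-1)"
  have hp: "h > 0" unfolding h_def by simp
  have nh: "(2::int)^r = 2*h" unfolding h_def using n_eq .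
  have ab: "0 \<le> a" "a < 2*h" "0 \<le> b" "b < 2*h" using assms(1) by (auto simp: u subadd_V_def nh)
  have "(a - b) mod (2*h) = 0" "(a+b) mod (2*h) = 0" using assms(2) unfolding Tm_def nh u by auto
  hence d1: "2*h dvd (a - b)" "2*h dvd (a+b)" by (simp_all add: mod_eq_0_iff_dvd)
  have "2*h dvd 2*a" using dvd_add[OF d1] by (simp add: algebra_simps)
  hence "h dvd a" by simp
  then obtain k where k: "a = h * k" by blast
  have k0: "k \<ge> 0"
  proof (rule ccontr)
    assume "\<not> k \<ge> 0" hence "h * k < 0" using hp mult_pos_neg by force
    thus False using ab k by linarith
  qed
  have k2: "k < 2"
  proof (rule ccontr)
    assume "\<not> k < 2" hence "h * 2 \<le> h * k" using hp by (intro mult_left_mono) auto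
    thus False using ab k by linarith
  qed
  have "k = 0 \<or> k = 1" using k0 k2 by linarith
  hence a: "a = 0 \<or> a = h" using k by auto
  have "a - b = 0" using small_dvd_zero[OF d1(1)] ab by linarith
  then show ?thesis using a u h_def by auto
qed

lemma sibling: assumes "u \<in> subadd_V (2^r)" "u' \<in> subadd_V (2^r)" "Tm r u = Tm r u'"
  "(fst u \<ge> 2^(r-1)) = (fst u' \<ge> 2^(r-1))"
  shows "u = u'"
proof -
  obtain a b where u: "u = (a,b)" by (cases u)
  obtain a' b' where u': "u' = (a',b')" by (cases u')
  define h where "h = (2::int)^(r-1)"
  have nh: "(2::int)^r = 2*h" unfolding h_def using n_eq .
  have ab: "0 \<le> a" "a < 2*h" "0 \<le> b" "b < 2*h" "0 \<le> a'" "a' < 2*h" "0 \<le> b'" "b' < 2*h"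
    using assms(1,2) by (auto simp: u u' subadd_V_def nh)
  have "(a - b) mod (2*h) = (a' - b') mod (2*h)" "(a + b) mod (2*h) = (a' + b') mod (2*h)"
    using assms(3) unfolding Tm_def nh u u' by auto
  hence d1: "2*h dvd ((a - b) - (a' - b'))" "2*h dvd ((a + b) - (a' + b'))"
    by (simp_all add: mod_eq_dvd_iff)
  have "2*h dvd 2*(a - a')" using dvd_add[OF d1] by (simp add: algebra_simps)
  hence "2*h dvd 2*(a - a')" by simp
  hence "h dvd (a - a')" by (metis dvd_mult_cancel_left zero_neq_numeral)
  moreover have "\<bar>a - a'\<bar> < h" using assms(4) ab unfolding h_def[symmetric] by (auto simp: u u')
  ultimately have aa: "a = a'" using small_dvd_zero by fastforce
  have "b - b' = 0" using small_dvd_zero[OF d1(2)] ab aa by simp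
  then show ?thesis using u u' aa by simp
qed


abbreviation "VV \<equiv> subadd_V (2^r)"
abbreviation "WW \<equiv> subadd_V (2^r) - {(0,0)}"
abbreviation "kap \<equiv> ((2::int)^(r-1), (2::int)^(r-1))"

lemma A_eq: "subadd_A (2^r) = {(u, Tm r u) | u. u \<in> VV}"
  by (auto simp: subadd_A_def Tm_def)

lemma kap_W: "kap \<in> WW"
proof -
  have "(2::int)^(r-1) < 2^r" using n_eq by simp
  thus ?thesis by (auto simp: subadd_V_def)
qed

lemma T_kap: "Tm r kap = (0,0)"
proof -
  have e: "(2::int)^(r-1) + 2^(r-1) = 2^r" using n_eq by simp
  show ?thesis unfolding Tm_def fst_conv snd_conv e by simp
qed

lemma T_0: "Tm r (0,0) = (0,0)"
  unfolding Tm_def by simp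

lemma zero_V: "(0,0) \<in> VV" by (simp add: subadd_V_def)

lemma T_W: assumes "u \<in> WW" "u \<noteq> kap" shows "Tm r u \<in> WW"
  using kernel[of u] assms Tm_V[of u] by auto

definition dep :: "int \<times> int \<Rightarrow> nat" where
  "dep u = (LEAST m. (Tm r ^^ Suc m) u = (0,0))"

lemma dep_ex: assumes "u \<in> VV" shows "(Tm r ^^ Suc (2*r-1)) u = (0,0)"
proof -
  have "Suc (2*r-1) = 2*r" using r1 by simp
  thus ?thesis using Tpow_zero[OF assms] by simp
qed

lemma dep_le: "u \<in> VV \<Longrightarrow> dep u \<le> 2*r-1"
  unfolding dep_def by (rule Least_le) (rule dep_ex)

lemma dep_kap_top: assumes "u \<in> WW" shows "(Tm r ^^ dep u) u = kap"
proof -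
  let ?w = "(Tm r ^^ dep u) u"
  have P: "(Tm r ^^ Suc (dep u)) u = (0,0)"
    unfolding dep_def by (rule LeastI[of _ "2*r-1"]) (rule dep_ex, use assms in auto)
  have Tw: "Tm r ?w = (0,0)" using P by simp
  have "?w \<noteq> (0,0) \<and> ?w \<in> VV"
  proof (cases "dep u")
    case 0 then show ?thesis using assms by simp
  next
    case (Suc j)
    have "\<not> (Tm r ^^ Suc j) u = (0,0)"
      using not_less_Least[of j "\<lambda>m. (Tm r ^^ Suc m) u = (0,0)"] Suc unfolding dep_def by simp
    moreover have "(Tm r ^^ Suc j) u \<in> VV" using Tm_V by simp
    ultimately show ?thesis using Suc by simp
  qed
  then show ?thesis using kernel[of ?w] Tw by auto
qed

lemma dep_kap: "dep kap = 0"
  unfolding dep_def using T_kap by (intro Least_eq_0) simp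

lemma dep_step: assumes "u \<in> WW" "u \<noteq> kap" shows "dep u = Suc (dep (Tm r u))"
proof -
  have ne: "Tm r u \<noteq> (0,0)" using T_W[OF assms] by auto
  have "dep u = Suc (LEAST m. (Tm r ^^ Suc (Suc m)) u = (0,0))"
    unfolding dep_def
    by (rule Least_Suc[of _ "2*r-1"]) (use dep_ex assms ne in auto)
  also have "(\<lambda>m. (Tm r ^^ Suc (Suc m)) u) = (\<lambda>m. (Tm r ^^ Suc m) (Tm r u))"
    by (simp only: funpow_Suc_right comp_def)
  finally show ?thesis unfolding dep_def by simp
qed

primrec gg :: "nat \<Rightarrow> int \<times> int \<Rightarrow> bool list" where
  "gg 0 u = []"
| "gg (Suc m) u = gg m (Tm r u) @ [fst u \<ge> 2^(r-1)]"

lemma length_gg: "length (gg m u) = m"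
  by (induction m arbitrary: u) auto

definition ff :: "int \<times> int \<Rightarrow> bool list" where
  "ff u = gg (dep u) u"

lemma length_ff: "length (ff u) = dep u"
  unfolding ff_def by (simp add: length_gg)

lemma ff_kap: "ff kap = []"
  unfolding ff_def dep_kap by simp

lemma ff_step: "u \<in> WW \<Longrightarrow> u \<noteq> kap \<Longrightarrow> ff u = ff (Tm r u) @ [fst u \<ge> 2^(r-1)]"
  unfolding ff_def by (simp add: dep_step)

lemma dep0: "u \<in> WW \<Longrightarrow> dep u = 0 \<Longrightarrow> u = kap"
  using dep_kap_top[of u] by simp

lemma ff_inj_aux: "\<forall>u u'. u \<in> WW \<longrightarrow> u' \<in> WW \<longrightarrow> dep u = m \<longrightarrow> ff u = ff u' \<longrightarrow> u = u'"
proof (induction m)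
  case 0
  then show ?case using dep0 length_ff by (metis list.size(3))
next
  case (Suc m)
  show ?case
  proof (intro allI impI)
    fix u u' assume h: "u \<in> WW" "u' \<in> WW" "dep u = Suc m" "ff u = ff u'"
    have d': "dep u' = Suc m" using h length_ff by metis
    have nk: "u \<noteq> kap" "u' \<noteq> kap" using h(3) d' dep_kap by auto
    have e: "ff (Tm r u) @ [fst u \<ge> 2^(r-1)] = ff (Tm r u') @ [fst u' \<ge> 2^(r-1)]"
      using ff_step[OF h(1) nk(1)] ff_step[OF h(2) nk(2)] h(4) by simp
    have dm: "dep (Tm r u) = m" using dep_step[OF h(1) nk(1)] h(3) by simp
    have "ff (Tm r u) = ff (Tm r u')" using e by simp
    then have "Tm r u = Tm r u'"
      using Suc.IH T_W[OF h(1) nk(1)] T_W[OF h(2) nk(2)] dm by blast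
    moreover have "(fst u \<ge> 2^(r-1)) = (fst u' \<ge> 2^(r-1))" using e by simp
    ultimately show "u = u'" using sibling h by auto
  qed
qed

lemma ff_inj: "inj_on ff WW"
  unfolding inj_on_def using ff_inj_aux by blast

lemma card_lists: "card (pbt_V d) = 2^(Suc d) - 1"
proof -
  have "pbt_V d = {xs. set xs \<subseteq> UNIV \<and> length xs \<le> d}" by (simp add: pbt_V_def)
  hence "card (pbt_V d) = (\<Sum>i\<le>d. 2^i)" using card_lists_length_le[of "UNIV::bool set" d] by simp
  moreover have "(\<Sum>i\<le>d. (2::nat)^i) + 1 = 2^(Suc d)" by (induction d) auto
  ultimately show ?thesis by simp
qed

lemma fin_pbt: "finite (pbt_V d)"
proof -
  have "pbt_V d = {xs. set xs \<subseteq> UNIV \<and> length xs \<le> d}" by (simp add: pbt_V_def)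
  thus ?thesis using finite_lists_length_le[of "UNIV::bool set" d] by simp
qed

lemma card_W: "card WW = 2^(2*r) - 1"
proof -
  have "card VV = nat (2^r) * nat (2^r)" by (simp add: subadd_V_def card_cartesian_product)
  also have "\<dots> = 2^r * 2^r" by (simp add: nat_power_eq)
  also have "\<dots> = 2^(2*r)" by (simp only: power_add[symmetric] mult_2)
  finally have "card VV = 2^(2*r)" .
  moreover have "finite VV" by (simp add: subadd_V_def)
  ultimately show ?thesis using zero_V by (simp add: card_Diff_singleton)
qed

lemma ff_bij: "bij_betw ff WW (pbt_V (2*r-1))"
proof -
  have sub: "ff ` WW \<subseteq> pbt_V (2*r-1)" using dep_le length_ff by (auto simp: pbt_V_def)
  have "card (ff ` WW) = card WW" using ff_inj by (simp add: card_image)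
  also have "\<dots> = card (pbt_V (2*r-1))"
  proof -
    have "Suc (2*r-1) = 2*r" using r1 by simp
    thus ?thesis using card_W card_lists[of "2*r-1"] by simp
  qed
  finally have "ff ` WW = pbt_V (2*r-1)" using card_subset_eq[OF fin_pbt sub] by simp
  thus ?thesis using ff_inj by (simp add: bij_betw_def)
qed


lemma arc_iff: assumes "u \<in> WW" "v \<in> WW"
  shows "(v = Tm r u) \<longleftrightarrow> (ff v, ff u) \<in> pbt_A (2*r-1)"
proof
  assume v: "v = Tm r u"
  have nk: "u \<noteq> kap" using v assms T_kap by auto
  have "ff u = ff v @ [fst u \<ge> 2^(r-1)]" using ff_step[OF assms(1) nk] v by simp
  moreover have "length (ff v) < 2*r-1"
    using length_ff dep_step[OF assms(1) nk] dep_le[of u] assms v by auto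
  ultimately show "(ff v, ff u) \<in> pbt_A (2*r-1)" unfolding pbt_A_def by blast
next
  assume "(ff v, ff u) \<in> pbt_A (2*r-1)"
  then obtain b where b: "ff u = ff v @ [b]" unfolding pbt_A_def by blast
  have "dep u \<noteq> 0" using b length_ff[of u] by simp
  hence nk: "u \<noteq> kap" using dep_kap by auto
  have "ff (Tm r u) = ff v" using ff_step[OF assms(1) nk] b by simp
  thus "v = Tm r u" using ff_inj T_W[OF assms(1) nk] assms(2) unfolding inj_on_def by metis
qed

end

theorem theorem5p6:
  fixes r :: nat
  assumes "r \<ge> 1"
  defines "n \<equiv> 2 ^ r"
  defines "W \<equiv> subadd_V n - {(0, 0)}"
  shows "inverted_PBT W (induced_A (subadd_A n) W) (2 * r - 1)
    \<and> subadd_V n = W \<union> {(0, 0)}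
    \<and> subadd_A n = induced_A (subadd_A n) W \<union>
        {((2 ^ (r - 1), 2 ^ (r - 1)), (0, 0)), ((0, 0), (0, 0))}"
proof -
  note r1 = assms(1)
  have A: "subadd_A n = {(u, Tm r u) | u. u \<in> subadd_V n}" unfolding n_def using A_eq[OF r1] .
  have p1: "inverted_PBT W (induced_A (subadd_A n) W) (2 * r - 1)"
    unfolding inverted_PBT_def
  proof (intro conjI exI[of _ "ff r"] ballI)
    show "induced_A (subadd_A n) W \<subseteq> W \<times> W" unfolding induced_A_def by blast
    show "bij_betw (ff r) W (pbt_V (2 * r - 1))" unfolding W_def n_def using ff_bij[OF r1] .
    fix u v assume uv: "u \<in> W" "v \<in> W"
    have "(u, v) \<in> induced_A (subadd_A n) W \<longleftrightarrow> v = Tm r u"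
      using uv unfolding induced_A_def A W_def by (auto; metis surj_pair)
    also have "\<dots> \<longleftrightarrow> (ff r v, ff r u) \<in> pbt_A (2 * r - 1)"
      using arc_iff[OF r1] uv unfolding W_def n_def by blast
    finally show "(u, v) \<in> induced_A (subadd_A n) W \<longleftrightarrow> (ff r v, ff r u) \<in> pbt_A (2 * r - 1)" .
  qed
  have z: "(0,0) \<in> subadd_V n" unfolding n_def using zero_V[OF r1] .
  have p2: "subadd_V n = W \<union> {(0, 0)}" using z unfolding W_def by blast
  have kW: "(2 ^ (r - 1), 2 ^ (r - 1)) \<in> W" unfolding W_def n_def using kap_W[OF r1] .
  have p3: "subadd_A n = induced_A (subadd_A n) W \<union>
        {((2 ^ (r - 1), 2 ^ (r - 1)), (0, 0)), ((0, 0), (0, 0))}"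
  proof
    show "subadd_A n \<subseteq> induced_A (subadd_A n) W \<union>
        {((2 ^ (r - 1), 2 ^ (r - 1)), (0, 0)), ((0, 0), (0, 0))}"
    proof
      fix e assume "e \<in> subadd_A n"
      then obtain u where e: "e = (u, Tm r u)" "u \<in> subadd_V n" unfolding A by blast
      show "e \<in> induced_A (subadd_A n) W \<union>
        {((2 ^ (r - 1), 2 ^ (r - 1)), (0, 0)), ((0, 0), (0, 0))}"
      proof (cases "u = (0,0) \<or> u = (2 ^ (r - 1), 2 ^ (r - 1))")
        case True then show ?thesis using e T_kap[OF r1] T_0[OF r1] by auto
      next
        case False
        hence "u \<in> W" "Tm r u \<in> W" using e T_W[OF r1, of u] unfolding W_def n_def by auto
        then show ?thesis using e `e \<in> subadd_A n` unfolding induced_A_def by auto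
      qed
    qed
    show "induced_A (subadd_A n) W \<union>
        {((2 ^ (r - 1), 2 ^ (r - 1)), (0, 0)), ((0, 0), (0, 0))} \<subseteq> subadd_A n"
      using z kW T_kap[OF r1] T_0[OF r1] unfolding induced_A_def A W_def by auto
  qed
  show ?thesis using p1 p2 p3 by blast
qed

end
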